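(* Let $a\ge 1$ and let $d$ be an odd integer with $d<a$. Then $U=\{(a,0),(0,0)\}\cup\{(c,d)\in\mathcal{B}\mid \max\{c,c+d\}<a\}$ is avoidable.
   Context: The bicyclic inverse semigroup is $\mathcal{B}=\{(a,b)\in\mathbb{Z}\times\mathbb{Z}\mid a\ge 0,\ a+b\ge 0\}$ with multiplication $(a,b)(c,d)=(\max\{c+d,a\}-d,\ b+d)$. A subset $U\subseteq\mathcal{B}$ is called avoidable if $\mathcal{B}$ can be partitioned into two subsets $A$ and $B$ such that no element of $U$ can be written as a product $xy$ of two distinct elements $x\neq y$ both in $A$, or both in $B$. *)

theory Defs
  imports Main
begin

definition bicyclic :: "(int \<times> int) set" where
  "bicyclic = {(a, b). a \<ge> 0 \<and> a + b \<ge> 0}"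

fun bmult :: "int \<times> int \<Rightarrow> int \<times> int \<Rightarrow> int \<times> int" where
  "bmult (a, b) (c, d) = (max (c + d) a - d, b + d)"

definition avoidable :: "(int \<times> int) set \<Rightarrow> bool" where
  "avoidable U \<longleftrightarrow> (\<exists>A B. A \<union> B = bicyclic \<and> A \<inter> B = {} \<and>
     (\<forall>x\<in>A. \<forall>y\<in>A. x \<noteq> y \<longrightarrow> bmult x y \<notin> U) \<and>
     (\<forall>x\<in>B. \<forall>y\<in>B. x \<noteq> y \<longrightarrow> bmult x y \<notin> U))"

end

theory Submission
  imports Defs
begin

definition gcol :: "int \<Rightarrow> int \<Rightarrow> bool" where
  "gcol d q = (if q mod \<bar>d\<bar> = 0 then 0 < q * d else 2 * (q mod \<bar>d\<bar>) < \<bar>d\<bar>)"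

lemma neg_mod_cases:
  fixes q D :: int assumes "D > 0"
  shows "(-q) mod D = (if q mod D = 0 then 0 else D - q mod D)"
  using assms by (simp add: zmod_zminus1_eq_if)

lemma mult_d_ge:
  fixes q d :: int
  assumes "d dvd q" "0 < q * d"
  shows "d * d \<le> q * d"
proof -
  obtain k where k: "q = d * k" using assms(1) by (auto simp: dvd_def)
  have eq: "q * d = k * (d * d)" using k by (simp add: algebra_simps)
  moreover have "d * d > 0" using assms k by (auto simp: zero_less_mult_iff)
  moreover have "k > 0" using assms(2) calculation by (auto simp: zero_less_mult_iff)
  ultimately have "1 * (d * d) \<le> k * (d * d)" by (intro mult_right_mono) auto
  then show ?thesis using eq by linarith
qed

lemma gcol_L1:
  fixes d q :: int assumes "odd d" "q \<noteq> 0"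
  shows "gcol d q \<noteq> gcol d (-q)"
proof -
  define D where "D = \<bar>d\<bar>"
  have D0: "D > 0" using assms(1) D_def by (cases "d = 0") auto
  have oD: "odd D" using assms(1) D_def by simp
  have "d \<noteq> 0" using assms by auto
  show ?thesis
  proof (cases "q mod D = 0")
    case True
    then have "(-q) mod D = 0" using neg_mod_cases[OF D0] by simp
    moreover have "q * d \<noteq> 0" using assms \<open>d \<noteq> 0\<close> by simp
    then have "0 < q * d \<longleftrightarrow> \<not> 0 < (-q) * d"
      by (metis mult_minus_left neg_0_less_iff_less not_less_iff_gr_or_eq)
    ultimately show ?thesis using True unfolding gcol_def D_def[symmetric] by auto
  next
    case False
    have r: "0 \<le> q mod D" "q mod D < D" using D0 by auto
    have ne: "2 * (q mod D) \<noteq> D" using oD by (metis dvd_triv_left)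
    have "(-q) mod D = D - q mod D" using neg_mod_cases[OF D0] False by simp
    then show ?thesis using False r ne unfolding gcol_def D_def[symmetric] by auto
  qed
qed

lemma gcol_L2:
  fixes d q :: int assumes "odd d"
  shows "gcol d q \<noteq> gcol d (d - q)"
proof -
  define D where "D = \<bar>d\<bar>"
  have D0: "D > 0" using assms(1) D_def by (cases "d = 0") auto
  have oD: "odd D" using assms(1) D_def by simp
  have dm: "d mod D = 0" using D_def by simp
  have e: "(d - q) mod D = (-q) mod D"
    by (metis dm diff_0 mod_diff_left_eq)
  show ?thesis
  proof (cases "q mod D = 0")
    case True
    then have z: "(d - q) mod D = 0" using e neg_mod_cases[OF D0] by simp
    have dq: "d dvd q" using True D_def by (simp add: mod_eq_0_iff_dvd)
    have "0 < q * d \<longleftrightarrow> \<not> 0 < (d - q) * d"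
    proof
      assume "0 < q * d"
      then have "d * d \<le> q * d" using mult_d_ge dq by blast
      then show "\<not> 0 < (d - q) * d" by (simp add: algebra_simps)
    next
      assume "\<not> 0 < (d - q) * d"
      moreover have "d * d > 0" using D0 D_def by (auto simp: zero_less_mult_iff)
      ultimately show "0 < q * d" by (simp add: algebra_simps)
    qed
    then show ?thesis using True z unfolding gcol_def D_def[symmetric] by auto
  next
    case False
    have r: "0 \<le> q mod D" "q mod D < D" using D0 by auto
    have ne: "2 * (q mod D) \<noteq> D" using oD by (metis dvd_triv_left)
    have "(d - q) mod D = D - q mod D" using e neg_mod_cases[OF D0] False by simp
    then show ?thesis using False r ne unfolding gcol_def D_def[symmetric] by auto
  qed
qed

theorem proposition5p4:
  fixes a d :: int
  assumes "a \<ge> 1" and "odd d" and "d < a"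
  shows "avoidable ({(a, 0), (0, 0)} \<union> {(c, d') \<in> bicyclic. d' = d \<and> max c (c + d) < a})"
proof -
  define U where "U = {(a, 0), (0, 0)} \<union> {(c, d') \<in> bicyclic. d' = d \<and> max c (c + d) < a}"
  define col where "col = (\<lambda>(p::int, q::int). (p, q) = (a, 0) \<or> gcol d q)"
  have key: "bmult x y \<notin> U" if xB: "x \<in> bicyclic" and yB: "y \<in> bicyclic" and ne: "x \<noteq> y"
    and cc: "col x = col y" for x y
  proof
    assume m: "bmult x y \<in> U"
    obtain p1 q1 where x: "x = (p1, q1)" by (cases x)
    obtain p2 q2 where y: "y = (p2, q2)" by (cases y)
    have b1: "p1 \<ge> 0" "p1 + q1 \<ge> 0" using xB x by (auto simp: bicyclic_def)
    have b2: "p2 \<ge> 0" "p2 + q2 \<ge> 0" using yB y by (auto simp: bicyclic_def)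
    have prod: "bmult x y = (max (p2 + q2) p1 - q2, q1 + q2)" using x y by simp
    have c: "((p1, q1) = (a, 0) \<or> gcol d q1) = ((p2, q2) = (a, 0) \<or> gcol d q2)"
      using cc x y col_def by simp
    have g0: "\<not> gcol d 0" by (simp add: gcol_def)
    consider (A) "bmult x y = (a, 0)" | (Z) "bmult x y = (0, 0)"
      | (O) c where "bmult x y = (c, d)" "max c (c + d) < a"
      using m unfolding U_def by auto
    then show False
    proof cases
      case A
      then have s: "q1 + q2 = 0" and mx: "max (p2 + q2) p1 - q2 = a" using prod by auto
      show False
      proof (cases "q1 = 0")
        case True
        then have "q2 = 0" using s by simp
        then show False using True mx c ne x y g0 by (auto simp: max_def split: if_splits)
      next
        case False
        have "q2 = - q1" using s by simp
        then show False using gcol_L1[OF assms(2) False] c False \<open>a \<ge> 1\<close> by auto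
      qed
    next
      case Z
      then have s: "q1 + q2 = 0" and mx: "max (p2 + q2) p1 - q2 = 0" using prod by auto
      show False
      proof (cases "q1 = 0")
        case True
        then show False using s mx ne x y b1 b2 by (auto simp: max_def split: if_splits)
      next
        case False
        have "q2 = - q1" using s by simp
        then show False using gcol_L1[OF assms(2) False] c False \<open>a \<ge> 1\<close> by auto
      qed
    next
      case (O c0)
      then have s: "q1 + q2 = d" and mx: "max (p2 + q2) p1 - q2 = c0" using prod by auto
      have nx: "(p1, q1) \<noteq> (a, 0)"
      proof
        assume "(p1, q1) = (a, 0)"
        then have "q2 = d" "p1 = a" using s by auto
        then show False using mx O(2) by (auto simp: max_def split: if_splits)
      qed
      have ny: "(p2, q2) \<noteq> (a, 0)"
      proof
        assume "(p2, q2) = (a, 0)"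
        then show False using mx O(2) by (auto simp: max_def split: if_splits)
      qed
      have "q2 = d - q1" using s by simp
      then show False using gcol_L2[OF assms(2), of q1] c nx ny by auto
    qed
  qed
  show ?thesis
    unfolding avoidable_def U_def[symmetric]
    apply (rule exI[of _ "{x \<in> bicyclic. col x}"])
    apply (rule exI[of _ "{x \<in> bicyclic. \<not> col x}"])
    using key by auto
qed

end
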